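(* Let $k$ be an odd integer with $k\ge 5$, let $D$ be a strong $k$-quasi-transitive digraph with $\mathrm{diam}(D)\ge k+2$, let $u,v\in V(D)$ with $d(u,v)=k+2$, and let $P=x_0x_1\ldots x_{k+2}$ be a shortest $(u,v)$-path with $x_0=u$, $x_{k+2}=v$. Suppose $D[V(P)]$ is a semicomplete digraph. Then for any $x\in V(D)\setminus V(P)$ and $x_i\in V(P)$: if $x\rightarrow x_i$, then $x$ is adjacent to every vertex of $\{x_0,x_1,\ldots,x_{i-1}\}$; if $x_i\rightarrow x$, then $x$ is adjacent to every vertex of $\{x_{i+1},x_{i+2},\ldots,x_{k+2}\}$.
   Context: All digraphs are finite, without loops or multiple arcs (opposite arcs allowed). $x\rightarrow y$ means $xy\in A(D)$; $x,y$ are adjacent if $x\rightarrow y$ or $y\rightarrow x$. For $k\ge 2$, $D$ is $k$-quasi-transitive if for every path $x_0x_1\ldots x_k$ of length $k$, $x_0$ and $x_k$ are adjacent. $d(x,y)$ is the length of a shortest $(x,y)$-path, $\mathrm{diam}(D)=\max_{x,y}d(x,y)$. $D[S]$ is the induced subdigraph. A semicomplete digraph: every two distinct vertices adjacent. *)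

theory Defs
  imports Main
begin

definition digraph :: "'a set \<Rightarrow> ('a \<times> 'a) set \<Rightarrow> bool" where
  "digraph V A \<longleftrightarrow> finite V \<and> A \<subseteq> V \<times> V \<and> (\<forall>x. (x, x) \<notin> A)"

definition adjacent :: "('a \<times> 'a) set \<Rightarrow> 'a \<Rightarrow> 'a \<Rightarrow> bool" where
  "adjacent A x y \<longleftrightarrow> (x, y) \<in> A \<or> (y, x) \<in> A"

(* a path x_0 x_1 ... x_n given as the list of its (distinct) vertices;
   its length is  length p - 1 *)
definition is_path :: "('a \<times> 'a) set \<Rightarrow> 'a list \<Rightarrow> bool" where
  "is_path A p \<longleftrightarrow> p \<noteq> [] \<and> distinct p \<and>
     (\<forall>i. Suc i < length p \<longrightarrow> (p ! i, p ! Suc i) \<in> A)"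

definition is_uv_path :: "('a \<times> 'a) set \<Rightarrow> 'a \<Rightarrow> 'a \<Rightarrow> 'a list \<Rightarrow> bool" where
  "is_uv_path A u v p \<longleftrightarrow> is_path A p \<and> hd p = u \<and> last p = v"

definition k_quasi_transitive :: "nat \<Rightarrow> 'a set \<Rightarrow> ('a \<times> 'a) set \<Rightarrow> bool" where
  "k_quasi_transitive k V A \<longleftrightarrow>
     (\<forall>p. is_path A p \<and> length p = Suc k \<longrightarrow> adjacent A (hd p) (last p))"

definition strong :: "'a set \<Rightarrow> ('a \<times> 'a) set \<Rightarrow> bool" where
  "strong V A \<longleftrightarrow> (\<forall>u\<in>V. \<forall>v\<in>V. \<exists>p. is_uv_path A u v p)"

definition dist :: "('a \<times> 'a) set \<Rightarrow> 'a \<Rightarrow> 'a \<Rightarrow> nat" where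
  "dist A u v = (LEAST n. \<exists>p. is_uv_path A u v p \<and> length p = Suc n)"

definition diam :: "'a set \<Rightarrow> ('a \<times> 'a) set \<Rightarrow> nat" where
  "diam V A = Max {dist A u v | u v. u \<in> V \<and> v \<in> V}"

definition semicomplete_on :: "('a \<times> 'a) set \<Rightarrow> 'a set \<Rightarrow> bool" where
  "semicomplete_on A S \<longleftrightarrow> (\<forall>x\<in>S. \<forall>y\<in>S. x \<noteq> y \<longrightarrow> adjacent A x y)"

end

theory Submission
  imports Defs
begin

definition R :: "nat \<Rightarrow> nat \<Rightarrow> bool" where
  "R a b \<longleftrightarrow> b = Suc a \<or> b + 2 \<le> a"

lemma succ_upt: "successively R [a..<b]"
  by (simp add: successively_conv_nth R_def)

lemma comb:
  assumes "n \<ge> 7" "l < h" "h \<le> n"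
  shows "\<exists>xs. length xs = n - 2 \<and> distinct xs \<and> (\<forall>t\<in>set xs. t \<le> n) \<and> xs \<noteq> []
     \<and> hd xs = h \<and> last xs = l \<and> successively R xs"
proof (cases "h \<ge> l + 5")
  case True
  define xs where "xs = [h..<n+1] @ [l+2..<h-2] @ [0..<l+1]"
  have "length xs = n - 2" using True assms unfolding xs_def by simp
  moreover have "distinct xs" using True assms unfolding xs_def by auto
  moreover have "\<forall>t\<in>set xs. t \<le> n" using True assms unfolding xs_def by auto
  moreover have "xs \<noteq> []" using assms unfolding xs_def by simp
  moreover have "hd xs = h" using assms unfolding xs_def by (simp add: upt_conv_Cons del: upt_Suc)
  moreover have "last xs = l" using assms unfolding xs_def by simp
  moreover have "successively R xs" using True assms unfolding xs_def
    by (simp add: successively_append_iff succ_upt hd_upt last_upt del: upt_Suc) (auto simp: R_def)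
  ultimately show ?thesis by blast
next
  case False
  define m where "m = h - l - 1"
  define b where "b = min l (3 - m)"
  define a where "a = n - (3 - m - b)"
  define xs where "xs = [h..<a+1] @ [b..<l+1]"
  have ah: "h \<le> a" "a \<le> n" using False assms unfolding a_def b_def m_def by auto
  have "length xs = n - 2" using False assms ah unfolding xs_def a_def b_def m_def by auto
  moreover have "distinct xs" using False assms ah unfolding xs_def by auto
  moreover have "\<forall>t\<in>set xs. t \<le> n" using False assms ah unfolding xs_def by auto
  moreover have "xs \<noteq> []" using assms ah unfolding xs_def by simp
  moreover have "hd xs = h" using assms ah unfolding xs_def by (simp add: upt_conv_Cons del: upt_Suc)
  moreover have "last xs = l" using assms ah unfolding xs_def b_def by simp
  moreover have "successively R xs"
  proof -
    have bl: "b \<le> l" unfolding b_def by simp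
    have "hd [b..<l+1] = b" using bl by (simp add: hd_upt del: upt_Suc)
    moreover have "last [h..<a+1] = a" using ah by (simp add: last_upt del: upt_Suc)
    moreover have "b + 2 \<le> a" using False assms ah bl unfolding a_def b_def m_def by auto
    ultimately have "R (last [h..<a+1]) (hd [b..<l+1])" by (simp add: R_def)
    then show ?thesis unfolding xs_def successively_append_iff using succ_upt by blast
  qed
  ultimately show ?thesis by blast
qed

lemma is_path_succ: "is_path A p \<longleftrightarrow> p \<noteq> [] \<and> distinct p \<and> successively (\<lambda>a b. (a,b) \<in> A) p"
  unfolding is_path_def successively_conv_nth by simp

lemma path_idx:
  assumes "idxs \<noteq> []" "distinct idxs" "\<forall>t\<in>set idxs. t < length P" "distinct P"
    "successively (\<lambda>x y. (P!x, P!y) \<in> A) idxs"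
  shows "is_path A (map (nth P) idxs)"
proof -
  have "inj_on (nth P) (set idxs)" using assms(3,4)
    by (auto simp: inj_on_def nth_eq_iff_index_eq)
  then have "distinct (map (nth P) idxs)" using assms(2) by (simp add: distinct_map)
  moreover have "successively (\<lambda>x y. (x, y) \<in> A) (map (nth P) idxs)"
    using assms(5) by (simp add: successively_map)
  ultimately show ?thesis using assms(1) unfolding is_path_def successively_conv_nth by simp
qed

theorem lemma2p7:
  fixes V :: "'a set" and A :: "('a \<times> 'a) set" and k :: nat
    and u v :: 'a and P :: "'a list"
  assumes "digraph V A"
    and "odd k" and "k \<ge> 5"
    and "strong V A"
    and "k_quasi_transitive k V A"
    and "diam V A \<ge> k + 2"
    and "u \<in> V" and "v \<in> V"
    and "dist A u v = k + 2"
    and "is_uv_path A u v P" and "length P = k + 3"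
    and "semicomplete_on A (set P)"
  shows "\<forall>x \<in> V - set P. \<forall>i < k + 3.
           ((x, P ! i) \<in> A \<longrightarrow> (\<forall>j < i. adjacent A x (P ! j))) \<and>
           ((P ! i, x) \<in> A \<longrightarrow> (\<forall>j. i < j \<and> j < k + 3 \<longrightarrow> adjacent A x (P ! j)))"
proof -
  have pP: "is_path A P" and hP: "hd P = u" and lP: "last P = v"
    using assms(10) unfolding is_uv_path_def by auto
  have dP: "distinct P" and nP: "P \<noteq> []" using pP unfolding is_path_def by auto
  have fw: "\<And>i. Suc i < length P \<Longrightarrow> (P!i, P!Suc i) \<in> A" using pP unfolding is_path_def by auto
  have u0: "P!0 = u" using hP nP by (simp add: hd_conv_nth)
  have vL: "P!(length P - 1) = v" using lP nP by (simp add: last_conv_nth)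
  have noback: "(P!b, P!a) \<notin> A" if ba: "b + 2 \<le> a" "a < length P" for a b
  proof
    assume arc: "(P!b, P!a) \<in> A"
    define idxs where "idxs = [0..<Suc b] @ [a..<length P]"
    have s1: "successively (\<lambda>x y. (P!x, P!y) \<in> A) [0..<Suc b]"
      using fw ba by (auto simp: successively_conv_nth simp del: upt_Suc)
    have s2: "successively (\<lambda>x y. (P!x, P!y) \<in> A) [a..<length P]"
      using fw ba by (auto simp: successively_conv_nth simp del: upt_Suc)
    have "last [0..<Suc b] = b" by simp
    moreover have "hd [a..<length P] = a" using ba by (simp add: hd_upt)
    ultimately have "successively (\<lambda>x y. (P!x, P!y) \<in> A) idxs"
      unfolding idxs_def successively_append_iff using s1 s2 arc by simp
    moreover have "distinct idxs" using ba unfolding idxs_def by auto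
    moreover have "\<forall>t\<in>set idxs. t < length P" using ba unfolding idxs_def by auto
    moreover have "idxs \<noteq> []" unfolding idxs_def by simp
    ultimately have pp: "is_path A (map (nth P) idxs)" using path_idx dP by blast
    have "hd (map (nth P) idxs) = u" using u0 unfolding idxs_def by (simp add: upt_conv_Cons del: upt_Suc)
    moreover have "last (map (nth P) idxs) = v" using vL ba nP unfolding idxs_def
      by (simp add: last_map last_upt last_append del: upt_Suc)
    ultimately have uv: "is_uv_path A u v (map (nth P) idxs)" using pp unfolding is_uv_path_def by simp
    have len: "length (map (nth P) idxs) = Suc (b + length P - a)" using ba unfolding idxs_def by simp
    have "dist A u v \<le> b + length P - a" unfolding dist_def
      by (rule Least_le) (use uv len in blast)
    then show False using assms(9) assms(11) ba by simp
  qed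
  have arcR: "(P!x, P!y) \<in> A" if "R x y" "x < length P" "y < length P" for x y
  proof (cases "y = Suc x")
    case True then show ?thesis using fw that by simp
  next
    case False
    then have yx: "y + 2 \<le> x" using that(1) by (simp add: R_def)
    have "P!x \<noteq> P!y" using dP that yx by (simp add: nth_eq_iff_index_eq)
    then have "adjacent A (P!x) (P!y)" using assms(12) that by (simp add: semicomplete_on_def)
    then show ?thesis using noback[OF yx that(2)] by (simp add: adjacent_def)
  qed
  have qpath: "\<exists>Q. is_path A Q \<and> length Q = k \<and> set Q \<subseteq> set P \<and> hd Q = P!h \<and> last Q = P!l"
    if lh: "l < h" "h < k + 3" for l h
  proof -
    obtain xs where xs: "length xs = (k+2) - 2" "distinct xs" "\<forall>t\<in>set xs. t \<le> k+2" "xs \<noteq> []"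
      "hd xs = h" "last xs = l" "successively R xs"
      using comb[of "k+2" l h] lh assms(3) by auto
    have "successively (\<lambda>x y. (P!x, P!y) \<in> A) xs"
      unfolding successively_conv_nth
    proof (intro allI impI)
      fix t assume t: "Suc t < length xs"
      have r: "R (xs!t) (xs!Suc t)" using xs(7) t by (simp add: successively_conv_nth)
      have "xs!t \<in> set xs" "xs!Suc t \<in> set xs" using t by auto
      then have "xs!t < length P" "xs!Suc t < length P" using xs(3) assms(11) by fastforce+
      then show "(P!(xs!t), P!(xs!Suc t)) \<in> A" using arcR r by blast
    qed
    then have "is_path A (map (nth P) xs)" using path_idx[of xs P A] xs dP assms(11) by force
    moreover have "set (map (nth P) xs) \<subseteq> set P" using xs(3) assms(11) by auto
    ultimately show ?thesis using xs by (intro exI[of _ "map (nth P) xs"]) (simp add: hd_map last_map)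
  qed
  show ?thesis
  proof (intro ballI allI impI conjI)
    fix x i j assume x: "x \<in> V - set P" and i: "i < k + 3" and xi: "(x, P ! i) \<in> A" and j: "j < i"
    obtain Q where Q: "is_path A Q" "length Q = k" "set Q \<subseteq> set P" "hd Q = P!i" "last Q = P!j"
      using qpath[OF j i] by blast
    have Qne: "Q \<noteq> []" using Q(1) unfolding is_path_def by simp
    have "is_path A (x # Q)" using Q x xi Qne unfolding is_path_succ
      by (auto simp: successively_Cons)
    then have "adjacent A (hd (x # Q)) (last (x # Q))" using assms(5) Q(2)
      unfolding k_quasi_transitive_def by (metis length_Cons)
    then show "adjacent A x (P ! j)" using Q Qne by simp
  next
    fix x i j assume x: "x \<in> V - set P" and i: "i < k + 3" and xi: "(P ! i, x) \<in> A" and j: "i < j \<and> j < k + 3"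
    obtain Q where Q: "is_path A Q" "length Q = k" "set Q \<subseteq> set P" "hd Q = P!j" "last Q = P!i"
      using qpath[of i j] j by blast
    have Qne: "Q \<noteq> []" using Q(1) unfolding is_path_def by simp
    have "is_path A (Q @ [x])" using Q x xi Qne unfolding is_path_succ
      by (auto simp: successively_append_iff)
    then have "adjacent A (hd (Q @ [x])) (last (Q @ [x]))" using assms(5) Q(2)
      unfolding k_quasi_transitive_def by (metis length_append_singleton)
    then show "adjacent A x (P ! j)" using Q Qne by (auto simp add: adjacent_def)
  qed
qed

end
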